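(* Let $(\lambda_n)_{n\in\mathbb{N}_0}$ be complex numbers with $\limsup_{n\to\infty}|\lambda_n|/n\le\beta$ for some $\beta\ge0$. Let $\gamma>0$ and $f\in C^\infty[x_0,x_0+\gamma]$ (complex-valued), and assume there are constants $\sigma\ge0$, $C>0$ with $|D^{(2n)}f(t)|\le C(2n)!\sigma^{2n}$ for all $t\in[x_0,x_0+\gamma]$ and $n\in\mathbb{N}_0$. Then there is $\delta\in(0,\gamma)$ such that $$s_{2n-1}(x)=\sum_{k=0}^{2n-1}D^{(k)}f(x_0)\,\Phi_{\Lambda_k}(x-x_0)$$ converges to $f(x)$ uniformly on $[x_0,x_0+\delta]$ as $n\to\infty$.
   Context: For $\lambda_0,\dots,\lambda_n\in\mathbb{C}$ the fundamental function is the entire function $\Phi_{(\lambda_0,\dots,\lambda_n)}(z)=\frac{1}{2\pi i}\int_{|w|=R}\frac{e^{zw}}{(w-\lambda_0)\cdots(w-\lambda_n)}\,dw$, where $R>\max_j|\lambda_j|$ and the circle is positively oriented. For a sequence $(\lambda_n)$, $\Lambda_n=(\lambda_0,\dots,\lambda_n)$, $\Phi_{\Lambda_n}=\Phi_{(\lambda_0,\dots,\lambda_n)}$, and $D^{(n)}f=(\frac{d}{dt}-\lambda_0)\cdots(\frac{d}{dt}-\lambda_{n-1})f$ with $D^{(0)}f=f$ (one-sided derivatives at endpoints). *)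

theory Defs
  imports "HOL-Analysis.Analysis" "HOL-Library.Liminf_Limsup"
begin

text \<open>Fundamental function Phi_(lambda_0,...,lambda_n)(z): the contour integral over the
positively oriented circle |w| = R, R = max_j |lambda_j| + 1, written out via the
parametrisation w(t) = R exp(2 pi i t), t in [0,1], so dw = 2 pi i w(t) dt.\<close>
definition fund_radius :: "(nat \<Rightarrow> complex) \<Rightarrow> nat \<Rightarrow> real" where
  "fund_radius lam n = Max ((\<lambda>j. cmod (lam j)) ` {..n}) + 1"

definition Phi :: "(nat \<Rightarrow> complex) \<Rightarrow> nat \<Rightarrow> complex \<Rightarrow> complex" where
  "Phi lam n z =
     (let R = fund_radius lam n;
          w = (\<lambda>t::real. complex_of_real R * exp (2 * complex_of_real pi * \<i> * complex_of_real t))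
      in (1 / (2 * complex_of_real pi * \<i>)) *
         integral {0..1} (\<lambda>t. exp (z * w t) / (\<Prod>j\<le>n. (w t - lam j))
                               * (2 * complex_of_real pi * \<i> * w t)))"

fun hderiv :: "real set \<Rightarrow> nat \<Rightarrow> (real \<Rightarrow> complex) \<Rightarrow> real \<Rightarrow> complex" where
  "hderiv S 0 f = f"
| "hderiv S (Suc n) f = (\<lambda>t. vector_derivative (hderiv S n f) (at t within S))"

definition smooth_on :: "real set \<Rightarrow> (real \<Rightarrow> complex) \<Rightarrow> bool" where
  "smooth_on S f \<longleftrightarrow>
     (\<forall>n. \<forall>t\<in>S. (hderiv S n f has_vector_derivative hderiv S (Suc n) f t) (at t within S))"

fun Dop :: "(nat \<Rightarrow> complex) \<Rightarrow> real set \<Rightarrow> nat \<Rightarrow> (real \<Rightarrow> complex) \<Rightarrow> real \<Rightarrow> complex" where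
  "Dop lam S 0 f = f"
| "Dop lam S (Suc n) f =
     (\<lambda>t. vector_derivative (Dop lam S n f) (at t within S) - lam n * Dop lam S n f t)"

end

theory Submission imports Defs begin

fun hh :: "(nat \<Rightarrow> complex) \<Rightarrow> nat \<Rightarrow> nat \<Rightarrow> complex" where
  "hh lam 0 m = (if m = 0 then 1 else 0)"
| "hh lam (Suc j) m = (\<Sum>a\<le>m. hh lam j a * lam j ^ (m - a))"

lemma hh0[simp]: "hh lam j 0 = 1"
  by (induction j) auto

lemma hh_rec: "hh lam (Suc j) (Suc m) = lam j * hh lam (Suc j) m + hh lam j (Suc m)"
proof -
  have "(\<Sum>a\<le>m. hh lam j a * lam j ^ (Suc m - a)) = lam j * (\<Sum>a\<le>m. hh lam j a * lam j ^ (m - a))"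
    by (simp add: sum_distrib_left Suc_diff_le mult_ac)
  then show ?thesis by (simp add: sum.atMost_Suc)
qed

lemma hh_bound:
  assumes "M \<ge> 0" "\<And>i. i \<le> j \<Longrightarrow> norm (lam i) \<le> M"
  shows "norm (hh lam (Suc j) m) \<le> real ((j + m) choose m) * M ^ m"
  using assms(2)
proof (induction j arbitrary: m)
  case 0
  have "hh lam (Suc 0) m = lam 0 ^ m"
    by (simp add: sum.atMost_shift sum.atMost_Suc_shift)
  then show ?case using 0[of 0] assms(1) by (simp add: norm_power power_mono)
next
  case (Suc j)
  have "norm (hh lam (Suc (Suc j)) m) \<le> (\<Sum>a\<le>m. norm (hh lam (Suc j) a) * norm (lam (Suc j)) ^ (m - a))"
    by (simp add: norm_mult norm_power order_trans[OF norm_sum])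
  also have "\<dots> \<le> (\<Sum>a\<le>m. real ((j + a) choose a) * M ^ a * M ^ (m - a))"
    apply (rule sum_mono)
    apply (rule mult_mono)
    using Suc assms(1) by (auto intro!: power_mono)
  also have "\<dots> = (\<Sum>a\<le>m. real ((j + a) choose a)) * M ^ m"
    by (simp add: sum_distrib_right mult.assoc power_add[symmetric])
  also have "(\<Sum>a\<le>m. real ((j + a) choose a)) = real (Suc (j + m) choose m)"
    by (simp only: of_nat_sum[symmetric] sum_choose_lower)
  finally show ?case by simp
qed

lemma hh_sums:
  assumes "\<And>i. i < j \<Longrightarrow> norm (lam i * u) < 1"
  shows "summable (\<lambda>m. norm (hh lam j m * u ^ m)) \<and>
         (\<lambda>m. hh lam j m * u ^ m) sums (1 / (\<Prod>i<j. 1 - lam i * u))"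
  using assms
proof (induction j)
  case 0
  have e: "(\<lambda>m. hh lam 0 m * u ^ m) = (\<lambda>m. if m = 0 then 1 else 0)" by auto
  have e2: "(\<lambda>m. norm (hh lam 0 m * u ^ m)) = (\<lambda>m. if m = 0 then 1 else 0)" by auto
  have "summable (\<lambda>m. norm (hh lam 0 m * u ^ m))"
    unfolding e2 using sums_summable[OF sums_single[of 0 "\<lambda>_. 1::real"]] by simp
  moreover have "(\<lambda>m. hh lam 0 m * u ^ m) sums (1 / (\<Prod>i<0. 1 - lam i * u))"
    unfolding e using sums_single[of 0 "\<lambda>_. 1::complex"] by simp
  ultimately show ?case by blast
next
  case (Suc j)
  let ?a = "\<lambda>m. hh lam j m * u ^ m"
  let ?b = "\<lambda>m. (lam j * u) ^ m"
  have IH: "summable (\<lambda>m. norm (?a m))" "?a sums (1 / (\<Prod>i<j. 1 - lam i * u))"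
    using Suc by auto
  have lt: "norm (lam j * u) < 1" using Suc.prems by auto
  have b: "summable (\<lambda>m. norm (?b m))" "?b sums (1 / (1 - lam j * u))"
    using lt by (auto simp: norm_power intro!: summable_geometric geometric_sums)
  have eq: "hh lam (Suc j) m * u ^ m = (\<Sum>i\<le>m. ?a i * ?b (m - i))" for m
  proof -
    have "hh lam (Suc j) m * u ^ m = (\<Sum>i\<le>m. hh lam j i * lam j ^ (m - i) * u ^ m)"
      by (simp add: sum_distrib_right)
    also have "\<dots> = (\<Sum>i\<le>m. ?a i * ?b (m - i))"
      by (intro sum.cong refl) (simp add: power_mult_distrib mult_ac power_add[symmetric])
    finally show ?thesis .
  qed
  have "(\<lambda>m. \<Sum>i\<le>m. ?a i * ?b (m - i)) sums (suminf ?a * suminf ?b)"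
    by (rule Cauchy_product_sums[OF IH(1) b(1)])
  moreover have "suminf ?a * suminf ?b = 1 / (\<Prod>i<Suc j. 1 - lam i * u)"
    using IH(2) b(2) by (simp add: sums_iff)
  moreover have "(\<lambda>m. hh lam (Suc j) m * u ^ m) = (\<lambda>m. \<Sum>i\<le>m. ?a i * ?b (m - i))"
    using eq by (rule ext)
  ultimately have s: "(\<lambda>m. hh lam (Suc j) m * u ^ m) sums (1 / (\<Prod>i<Suc j. 1 - lam i * u))"
    by simp
  have "(\<lambda>m. \<Sum>i\<le>m. norm (?a i) * norm (?b (m - i))) sums ((\<Sum>m. norm (?a m)) * (\<Sum>m. norm (?b m)))"
    using Cauchy_product_sums[of "\<lambda>m. norm (?a m)" "\<lambda>m. norm (?b m)"] IH(1) b(1) by simp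
  hence "summable (\<lambda>m. \<Sum>i\<le>m. norm (?a i) * norm (?b (m - i)))" by (rule sums_summable)
  hence "summable (\<lambda>m. norm (hh lam (Suc j) m * u ^ m))"
    apply (rule summable_comparison_test[rotated])
    apply (rule exI[of _ 0])
    apply (intro allI impI)
    apply (simp only: eq real_norm_def abs_norm_cancel)
    apply (rule order_trans[OF norm_sum])
    by (simp add: norm_mult)
  with s show ?case by blast
qed

declare hh.simps(2)[simp del]

lemma integral_sums_unif:
  fixes f :: "nat \<Rightarrow> real \<Rightarrow> complex"
  assumes bnd: "\<And>n x. x \<in> {a..b} \<Longrightarrow> norm (f n x) \<le> M n" and sM: "summable M"
    and cont: "\<And>n. continuous_on {a..b} (f n)"
  shows "(\<lambda>n. integral {a..b} (f n)) sums integral {a..b} (\<lambda>x. \<Sum>n. f n x)"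
proof -
  have u: "uniform_limit {a..b} (\<lambda>n x. \<Sum>i<n. f i x) (\<lambda>x. \<Sum>n. f n x) sequentially"
    by (rule Weierstrass_m_test[OF bnd sM])
  obtain I J where I: "\<And>n. ((\<lambda>x. \<Sum>i<n. f i x) has_integral I n) {a..b}"
    and J: "((\<lambda>x. \<Sum>n. f n x) has_integral J) {a..b}" and lim: "I \<longlonglongrightarrow> J"
    by (rule uniform_limit_integral[OF u]) (auto intro!: continuous_on_sum cont)
  have Ieq: "I n = (\<Sum>i<n. integral {a..b} (f i))" for n
  proof -
    have "I n = integral {a..b} (\<lambda>x. \<Sum>i<n. f i x)" using I[of n] by (simp add: integral_unique)
    also have "\<dots> = (\<Sum>i<n. integral {a..b} (f i))"
      by (rule integral_sum) (auto intro!: integrable_continuous_interval cont)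
    finally show ?thesis .
  qed
  moreover have "J = integral {a..b} (\<lambda>x. \<Sum>n. f n x)" using J by (simp add: integral_unique)
  moreover have "I = (\<lambda>n. \<Sum>i<n. integral {a..b} (f i))" using Ieq by (rule ext)
  ultimately show ?thesis using lim unfolding sums_def by simp
qed

lemma integral_exp_int:
  "integral {0..1} (\<lambda>t::real. exp (2 * complex_of_real pi * \<i> * of_int n * complex_of_real t))
     = (if n = 0 then 1 else 0)"
proof (cases "n = 0")
  case True then show ?thesis by simp
next
  case False
  define c where "c = 2 * complex_of_real pi * \<i> * of_int n"
  have c0: "c \<noteq> 0" using False by (simp add: c_def)
  have d: "((\<lambda>t. exp (c * complex_of_real t) / c) has_vector_derivative exp (c * complex_of_real t))
            (at t within {0..1})" for t
  proof -
    have 1: "(complex_of_real has_vector_derivative 1) (at t within {0..1})"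
      using has_vector_derivative_of_real[of "\<lambda>x. x" 1, OF DERIV_ident] by simp
    have 2: "((\<lambda>z. exp (c * z) / c) has_field_derivative exp (c * complex_of_real t))
               (at (complex_of_real t) within complex_of_real ` {0..1})"
      by (rule derivative_eq_intros refl | use c0 in simp)+
    show ?thesis using field_vector_diff_chain_within[OF 1 2] by (simp add: o_def)
  qed
  have "((\<lambda>t. exp (c * complex_of_real t)) has_integral (exp (c * 1) / c - exp (c * 0) / c)) {0..1}"
    using fundamental_theorem_of_calculus[of 0 1 "\<lambda>t. exp (c * complex_of_real t) / c"] d by simp
  moreover have "exp c = 1"
    using exp_integer_2pi[of "real_of_int n"] by (simp add: c_def mult_ac)
  ultimately show ?thesis using False by (simp add: c_def integral_unique mult_ac)
qed

definition ee :: "real \<Rightarrow> complex" where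
  "ee t = exp (2 * complex_of_real pi * \<i> * complex_of_real t)"

lemma norm_ee[simp]: "norm (ee t) = 1"
  unfolding ee_def by (simp add: norm_exp_eq_Re)

lemma ee_pow: "ee t ^ j * inverse (ee t) ^ p
   = exp (2 * complex_of_real pi * \<i> * of_int (int j - int p) * complex_of_real t)"
proof -
  have "ee t ^ j = exp (of_nat j * (2 * complex_of_real pi * \<i> * complex_of_real t))"
    unfolding ee_def by (simp add: exp_of_nat_mult)
  moreover have "inverse (ee t) ^ p = exp (- (of_nat p * (2 * complex_of_real pi * \<i> * complex_of_real t)))"
    unfolding ee_def by (simp add: exp_of_nat_mult exp_minus power_inverse)
  ultimately show ?thesis by (simp add: exp_add[symmetric] algebra_simps)
qed

lemma integral_E:
  assumes R: "R > 0"
  shows "integral {0..1} (\<lambda>t. exp (z * (of_real R * ee t)) * inverse (of_real R * ee t) ^ p)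
         = z ^ p / fact p"
proof -
  define f where "f j t = (z * (of_real R * ee t)) ^ j /\<^sub>R fact j * inverse (of_real R * ee t) ^ p" for j t
  have bnd: "norm (f j t) \<le> (norm z * R) ^ j / fact j * (1 / R) ^ p" for j t
    using R by (simp add: f_def norm_mult norm_power norm_divide power_mult_distrib norm_inverse
        divide_inverse)
  have sM: "summable (\<lambda>j. (norm z * R) ^ j / fact j * (1 / R) ^ p)"
    by (intro summable_mult2) (simp add: summable_exp divide_inverse mult.commute)
  have cont: "continuous_on {0..1} (f j)" for j
    unfolding f_def ee_def using R by (intro continuous_intros) auto
  have "(\<lambda>j. integral {0..1} (f j)) sums integral {0..1} (\<lambda>t. \<Sum>j. f j t)"
    by (rule integral_sums_unif[OF bnd sM cont])
  moreover have "(\<Sum>j. f j t) = exp (z * (of_real R * ee t)) * inverse (of_real R * ee t) ^ p" for t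
    unfolding f_def by (rule sums_unique[symmetric], rule sums_mult2, rule exp_converges)
  moreover have ij: "integral {0..1} (f j) = (if j = p then z ^ p / fact p else 0)" for j
  proof -
    define K where "K = z ^ j / fact j * of_real R ^ j * inverse (of_real R) ^ p"
    define g where "g t = exp (2 * complex_of_real pi * \<i> * of_int (int j - int p) * complex_of_real t)" for t
    have "f j t = K * g t" for t
      unfolding f_def K_def g_def ee_pow[symmetric]
      by (simp add: power_mult_distrib scaleR_conv_of_real field_simps)
    then have "f j = (\<lambda>t. K * g t)" by (rule ext)
    then have "integral {0..1} (f j) = (z ^ j / fact j * of_real R ^ j * inverse (of_real R) ^ p) *
         integral {0..1} (\<lambda>t. exp (2 * complex_of_real pi * \<i> * of_int (int j - int p) * complex_of_real t))"
      by (simp add: integral_mult_right K_def g_def)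
    also have "\<dots> = (if j = p then z ^ p / fact p else 0)"
    proof (cases "j = p")
      case True
      have e0: "int j - int p = 0" using True by simp
      have e1: "of_real R ^ p * inverse (of_real R :: complex) ^ p = 1"
      proof -
        have "of_real R * inverse (of_real R :: complex) = 1" using R by simp
        then show ?thesis by (simp only: power_mult_distrib[symmetric]) simp
      qed
      have e2: "z ^ p / fact p * of_real R ^ p * inverse (of_real R) ^ p = z ^ p / fact p"
        by (simp only: mult.assoc e1 mult_1_right)
      show ?thesis unfolding e0 integral_exp_int[of 0] using True e2 by simp
    next
      case False
      then have "int j - int p \<noteq> 0" by simp
      then show ?thesis using False by (simp only: integral_exp_int if_False) simp
    qed
    finally show ?thesis .
  qed
  moreover have "(\<lambda>j. integral {0..1} (f j)) = (\<lambda>j. if j = p then z ^ p / fact p else 0)"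
    using ij by (rule ext)
  ultimately have "(\<lambda>j. if j = p then z ^ p / fact p else 0) sums
      integral {0..1} (\<lambda>t. exp (z * (of_real R * ee t)) * inverse (of_real R * ee t) ^ p)"
    by simp
  then show ?thesis
    using sums_single[of p "\<lambda>_. z ^ p / fact p"] sums_unique2 by blast
qed

lemma fund_radius_props:
  shows "fund_radius lam k > 0" "\<And>j. j \<le> k \<Longrightarrow> norm (lam j) < fund_radius lam k"
proof -
  let ?Mx = "Max ((\<lambda>j. cmod (lam j)) ` {..k})"
  have le: "norm (lam j) \<le> ?Mx" if "j \<le> k" for j
    using that by (intro Max_ge) auto
  have "0 \<le> ?Mx" using le[of 0] norm_ge_zero[of "lam 0"] by linarith
  then show "fund_radius lam k > 0" by (simp add: fund_radius_def)
  show "norm (lam j) < fund_radius lam k" if "j \<le> k" for j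
    using le[OF that] by (simp add: fund_radius_def)
qed

lemma ee_nz[simp]: "ee t \<noteq> 0"
  unfolding ee_def by simp

lemma aux_field: fixes W E Q :: complex assumes "W \<noteq> 0"
  shows "1 / Q * (E * inverse W ^ k) = E / (W ^ Suc k * Q) * W"
  using assms by (cases "Q = 0") (simp_all add: field_simps power_inverse)

lemma Phi_series:
  "(\<lambda>m. hh lam (Suc k) m * (z ^ (k + m) / fact (k + m))) sums Phi lam k z"
proof -
  define R where "R = fund_radius lam k"
  have R: "R > 0" "\<And>j. j \<le> k \<Longrightarrow> norm (lam j) < R"
    using fund_radius_props[where lam=lam and k=k] by (auto simp: R_def)
  define w where "w t = complex_of_real R * ee t" for t
  have wnz: "w t \<noteq> 0" for t using R by (simp add: w_def)
  have nw: "norm (w t) = R" for t using R by (simp add: w_def norm_mult)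
  have nu: "norm (inverse (w t)) = 1 / R" for t using nw by (simp add: norm_inverse divide_inverse)
  have lt: "norm (lam i * inverse (w t)) < 1" if "i < Suc k" for i t
    using R(2)[of i] that R(1) by (simp add: norm_mult nu)
  have hs: "summable (\<lambda>m. norm (hh lam (Suc k) m * inverse (w t) ^ m)) \<and>
      (\<lambda>m. hh lam (Suc k) m * inverse (w t) ^ m) sums (1 / (\<Prod>i<Suc k. 1 - lam i * inverse (w t)))" for t
    by (rule hh_sums) (rule lt)
  define G where "G t = (\<Sum>m. hh lam (Suc k) m * (exp (z * w t) * inverse (w t) ^ (k + m)))" for t
  have prodw: "(\<Prod>j\<le>k. w t - lam j) = w t ^ Suc k * (\<Prod>i<Suc k. 1 - lam i * inverse (w t))" for t
  proof -
    have "(\<Prod>j\<le>k. w t - lam j) = (\<Prod>j\<le>k. w t * (1 - lam j * inverse (w t)))"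
      using wnz[of t] by (intro prod.cong refl) (simp add: algebra_simps)
    also have "\<dots> = w t ^ Suc k * (\<Prod>i<Suc k. 1 - lam i * inverse (w t))"
      by (simp add: prod.distrib lessThan_Suc_atMost)
    finally show ?thesis .
  qed
  have Gt: "G t = exp (z * w t) / (\<Prod>j\<le>k. w t - lam j) * w t" for t
  proof -
    have "(\<lambda>m. (hh lam (Suc k) m * inverse (w t) ^ m) * (exp (z * w t) * inverse (w t) ^ k)) sums
          ((1 / (\<Prod>i<Suc k. 1 - lam i * inverse (w t))) * (exp (z * w t) * inverse (w t) ^ k))"
      using hs[of t] by (intro sums_mult2) blast
    then have "G t = (1 / (\<Prod>i<Suc k. 1 - lam i * inverse (w t))) * (exp (z * w t) * inverse (w t) ^ k)"
      unfolding G_def by (simp add: sums_iff power_add mult_ac)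
    also have "\<dots> = exp (z * w t) / (\<Prod>j\<le>k. w t - lam j) * w t"
      unfolding prodw using wnz[of t] by (rule aux_field)
    finally show ?thesis .
  qed
  have PhiG: "Phi lam k z = integral {0..1} G"
  proof -
    have "Phi lam k z = (1 / (2 * complex_of_real pi * \<i>)) *
        integral {0..1} (\<lambda>t. (2 * complex_of_real pi * \<i>) * G t)"
      unfolding Phi_def Let_def Gt
      by (simp add: R_def[symmetric] w_def ee_def mult_ac)
    also have "\<dots> = integral {0..1} G"
      by (simp add: integral_mult_right)
    finally show ?thesis .
  qed
  define fm where "fm m t = hh lam (Suc k) m * (exp (z * w t) * inverse (w t) ^ (k + m))" for m t
  define Mm where "Mm m = norm (hh lam (Suc k) m) * (1 / R) ^ m * (exp (norm z * R) * (1 / R) ^ k)" for m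
  have bnd: "norm (fm m t) \<le> Mm m" for m t
  proof -
    have e: "norm (exp (z * w t)) \<le> exp (norm z * R)"
      using norm_exp[of "z * w t"] by (simp add: norm_mult nw)
    have "norm (fm m t) = norm (hh lam (Suc k) m) * (norm (exp (z * w t)) * (1 / R) ^ (k + m))"
      unfolding fm_def by (simp only: norm_mult norm_power nu)
    also have "\<dots> \<le> norm (hh lam (Suc k) m) * (exp (norm z * R) * (1 / R) ^ (k + m))"
      using R(1) by (intro mult_left_mono mult_right_mono e) auto
    also have "\<dots> = Mm m" unfolding Mm_def by (simp del: hh.simps add: power_add mult_ac)
    finally show ?thesis .
  qed
  have sM: "summable Mm"
  proof -
    have "summable (\<lambda>m. norm (hh lam (Suc k) m * (complex_of_real (1 / R)) ^ m))"
    proof -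
      have lt2: "norm (lam i * complex_of_real (1 / R)) < 1" if "i < Suc k" for i
        using R(2)[of i] that R(1) by (simp add: norm_mult norm_divide divide_simps)
      show ?thesis using conjunct1[OF hh_sums[OF lt2]] by (simp del: hh.simps)
    qed
    then have "summable (\<lambda>m. norm (hh lam (Suc k) m) * (1 / R) ^ m)"
      using R by (simp add: norm_mult norm_power norm_divide del: hh.simps)
    then show ?thesis unfolding Mm_def by (rule summable_mult2)
  qed
  have cont: "continuous_on {0..1} (fm m)" for m
    unfolding fm_def w_def ee_def using R
    by (intro continuous_intros) auto
  have "(\<lambda>m. integral {0..1} (fm m)) sums integral {0..1} (\<lambda>t. \<Sum>m. fm m t)"
    by (rule integral_sums_unif[OF bnd sM cont])
  moreover have "(\<lambda>t. \<Sum>m. fm m t) = G" by (rule ext) (simp add: fm_def G_def)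
  moreover have "integral {0..1} (fm m) = hh lam (Suc k) m * (z ^ (k + m) / fact (k + m))" for m
    unfolding fm_def using integral_E[OF R(1), of z "k + m"]
    by (simp add: integral_mult_right w_def)
  ultimately show ?thesis using PhiG by simp
qed

definition cf :: "(nat \<Rightarrow> complex) \<Rightarrow> nat \<Rightarrow> nat \<Rightarrow> complex" where
  "cf lam k n = (if k \<le> n then hh lam (Suc k) (n - k) / fact n else 0)"

definition phis :: "(nat \<Rightarrow> complex) \<Rightarrow> nat \<Rightarrow> complex \<Rightarrow> complex" where
  "phis lam k z = (\<Sum>n. cf lam k n * z ^ n)"

lemma cf_sums_Phi: "(\<lambda>n. cf lam k n * z ^ n) sums Phi lam k z"
proof -
  have "(\<lambda>i. cf lam k (i + k) * z ^ (i + k)) = (\<lambda>m. hh lam (Suc k) m * (z ^ (k + m) / fact (k + m)))"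
    by (auto simp: cf_def add.commute)
  then have "(\<lambda>i. cf lam k (i + k) * z ^ (i + k)) sums Phi lam k z"
    using Phi_series by simp
  then show ?thesis
    by (subst (asm) sums_zero_iff_shift) (auto simp: cf_def)
qed

lemma Phi_eq_phis: "Phi lam k z = phis lam k z"
  using cf_sums_Phi unfolding phis_def by (simp add: sums_iff)

lemma cf_bound:
  assumes "M \<ge> 0" "\<And>j. j \<le> k \<Longrightarrow> norm (lam j) \<le> M"
  shows "norm (cf lam k n) \<le> (if k \<le> n then real (n choose (n - k)) * M ^ (n - k) / fact n else 0)"
proof (cases "k \<le> n")
  case True
  have "norm (hh lam (Suc k) (n - k)) \<le> real ((k + (n - k)) choose (n - k)) * M ^ (n - k)"
    by (rule hh_bound[OF assms])
  then show ?thesis using True by (simp add: cf_def norm_divide divide_right_mono)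
qed (simp add: cf_def)

lemma cf_summable:
  "summable (\<lambda>n. norm (cf lam k n * z ^ n))"
proof -
  define M where "M = (\<Sum>j\<le>k. cmod (lam j))"
  have M0: "M \<ge> 0" by (simp add: M_def sum_nonneg)
  have Mj: "norm (lam j) \<le> M" if "j \<le> k" for j
    unfolding M_def using that by (intro member_le_sum) auto
  have b: "norm (cf lam k n * z ^ n) \<le> inverse (fact n) * (2 * (M + 1) * norm z) ^ n" for n
  proof -
    have "norm (cf lam k n) \<le> 2 ^ n * (M + 1) ^ n / fact n"
    proof -
      have "norm (cf lam k n) \<le> (if k \<le> n then real (n choose (n - k)) * M ^ (n - k) / fact n else 0)"
        by (rule cf_bound[OF M0 Mj])
      also have "\<dots> \<le> 2 ^ n * (M + 1) ^ n / fact n"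
      proof (cases "k \<le> n")
        case True
        have "real (n choose (n - k)) \<le> 2 ^ n"
        proof -
          have "(n choose (n - k)) \<le> 2 ^ n" by (rule binomial_le_pow2)
          then have "real (n choose (n - k)) \<le> real (2 ^ n)" by (simp only: of_nat_le_iff)
          then show ?thesis by simp
        qed
        moreover have "M ^ (n - k) \<le> (M + 1) ^ n"
        proof -
          have "M ^ (n - k) \<le> (M + 1) ^ (n - k)" using M0 by (intro power_mono) auto
          also have "\<dots> \<le> (M + 1) ^ n" using M0 by (intro power_increasing) auto
          finally show ?thesis .
        qed
        ultimately have "real (n choose (n - k)) * M ^ (n - k) \<le> 2 ^ n * (M + 1) ^ n"
          by (intro mult_mono) (use M0 in auto)
        then show ?thesis using True by (simp add: divide_right_mono)
      qed (use M0 in simp)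
      finally show ?thesis .
    qed
    then have "norm (cf lam k n) * norm z ^ n \<le> (2 ^ n * (M + 1) ^ n / fact n) * norm z ^ n"
      by (rule mult_right_mono) auto
    moreover have "(2 ^ n * (M + 1) ^ n / fact n) * norm z ^ n = inverse (fact n) * (2 * (M + 1) * norm z) ^ n"
      by (simp only: power_mult_distrib) (simp add: divide_inverse mult_ac)
    ultimately show ?thesis
      by (simp add: norm_mult norm_power)
  qed
  show ?thesis
    by (rule summable_comparison_test[OF _ summable_exp[of "2 * (M + 1) * norm z"]])
       (use b in auto)
qed

lemma aux_div: "a \<noteq> 0 \<Longrightarrow> b \<noteq> 0 \<Longrightarrow> a * (x / (a * b)) = x / (b::complex)"
  by (simp add: field_simps)

lemma fact_Suc_div: "of_nat (Suc n) * (x / fact (Suc n)) = (x / fact n :: complex)"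
proof -
  have "fact (Suc n) = (of_nat (Suc n) * fact n :: complex)" by (rule fact_Suc)
  moreover have "(of_nat (Suc n) :: complex) \<noteq> 0" by (simp only: of_nat_eq_0_iff)
  ultimately show ?thesis by (simp only:) (rule aux_div; simp)
qed

lemma diffs_cf:
  "diffs (cf lam k) n = lam k * cf lam k n + (if k = 0 then 0 else cf lam (k - 1) n)"
proof -
  consider "k \<le> n" | "k = Suc n" | "k > Suc n" by linarith
  then show ?thesis
  proof cases
    case 1
    have e: "Suc n - k = Suc (n - k)" using 1 by auto
    note f = fact_Suc_div
    have "diffs (cf lam k) n = hh lam (Suc k) (Suc (n - k)) / fact n"
      unfolding diffs_def cf_def using 1 by (simp only: e f if_True le_SucI)
    also have "\<dots> = lam k * (hh lam (Suc k) (n - k) / fact n) + hh lam k (Suc (n - k)) / fact n"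
      by (simp add: hh_rec add_divide_distrib)
    also have "\<dots> = lam k * cf lam k n + (if k = 0 then 0 else cf lam (k - 1) n)"
    proof (cases k)
      case 0 then show ?thesis using 1 by (simp add: cf_def)
    next
      case (Suc k')
      then have "n - k' = Suc (n - k)" using 1 by auto
      then show ?thesis using 1 Suc by (simp add: cf_def)
    qed
    finally show ?thesis .
  next
    case 2
    have "diffs (cf lam k) n = of_nat (Suc n) * (1 / fact (Suc n))"
      unfolding diffs_def cf_def using 2 by simp
    also have "\<dots> = 1 / fact n" by (rule fact_Suc_div)
    finally have "diffs (cf lam k) n = 1 / fact n" .
    moreover have "cf lam (k - 1) n = 1 / fact n" using 2 by (simp add: cf_def)
    moreover have "cf lam k n = 0" using 2 by (simp add: cf_def)
    ultimately show ?thesis using 2 by simp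
  next
    case 3
    then show ?thesis by (simp add: diffs_def cf_def)
  qed
qed


lemma phis_sums: "(\<lambda>n. cf lam k n * z ^ n) sums phis lam k z"
  unfolding phis_def by (rule summable_sums[OF summable_norm_cancel[OF cf_summable]])

lemma phis_deriv:
  "(phis lam k has_field_derivative (lam k * phis lam k z + (if k = 0 then 0 else phis lam (k - 1) z))) (at z)"
proof -
  define K where "K = complex_of_real (norm z + 1)"
  have sK: "summable (\<lambda>n. cf lam k n * K ^ n)"
    by (rule summable_norm_cancel[OF cf_summable])
  have nK: "norm z < norm K" by (simp add: K_def)
  have D: "((\<lambda>x. \<Sum>n. cf lam k n * x ^ n) has_field_derivative (\<Sum>n. diffs (cf lam k) n * z ^ n)) (at z)"
    by (rule termdiffs_strong[OF sK nK])
  have S: "(\<lambda>n. diffs (cf lam k) n * z ^ n) sums (lam k * phis lam k z + (if k = 0 then 0 else phis lam (k - 1) z))"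
  proof (cases k)
    case 0
    have "(\<lambda>n. diffs (cf lam k) n * z ^ n) = (\<lambda>n. lam k * (cf lam k n * z ^ n))"
      by (rule ext) (simp add: diffs_cf 0)
    moreover have "(\<lambda>n. lam k * (cf lam k n * z ^ n)) sums (lam k * phis lam k z)"
      by (rule sums_mult[OF phis_sums])
    ultimately show ?thesis using 0 by simp
  next
    case (Suc k')
    have "(\<lambda>n. diffs (cf lam k) n * z ^ n) = (\<lambda>n. lam k * (cf lam k n * z ^ n) + cf lam k' n * z ^ n)"
      by (rule ext) (simp add: diffs_cf Suc distrib_right mult.assoc)
    moreover have "(\<lambda>n. lam k * (cf lam k n * z ^ n) + cf lam k' n * z ^ n) sums (lam k * phis lam k z + phis lam k' z)"
      by (rule sums_add[OF sums_mult[OF phis_sums] phis_sums])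
    ultimately show ?thesis using Suc by simp
  qed
  have "(\<lambda>x. \<Sum>n. cf lam k n * x ^ n) = phis lam k" by (rule ext) (simp add: phis_def)
  then show ?thesis using D S by (simp add: sums_iff)
qed

lemma phis_zero: "phis lam k 0 = (if k = 0 then 1 else 0)"
  unfolding phis_def using powser_zero[of "cf lam k"] by (simp add: cf_def)

lemma aux_real: "F \<noteq> 0 \<Longrightarrow> A \<noteq> 0 \<Longrightarrow> B \<noteq> 0 \<Longrightarrow>
  F / (A * B) * X / F * (Y * Z) = Z / B * (X * Y / A :: real)"
  by (simp add: field_simps)

lemma phis_bound:
  assumes M: "M \<ge> 0" "\<And>j. j \<le> k \<Longrightarrow> norm (lam j) \<le> M" and s: "s \<ge> 0"
  shows "norm (phis lam k (complex_of_real s)) \<le> s ^ k / fact k * exp (M * s)"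
proof -
  define b where "b n = (if k \<le> n then real (n choose (n - k)) * M ^ (n - k) / fact n * s ^ n else 0)" for n
  have bs: "b sums (s ^ k / fact k * exp (M * s))"
  proof -
    have "(\<lambda>i. b (i + k)) = (\<lambda>i. s ^ k / fact k * ((M * s) ^ i / fact i))"
    proof
      fix i
      have c: "real ((i + k) choose i) = fact (i + k) / (fact i * fact k)"
        using binomial_fact[of i "i + k"] by simp
      have "b (i + k) = real ((i + k) choose i) * M ^ i / fact (i + k) * (s ^ i * s ^ k)"
        unfolding b_def by (simp add: power_add)
      also have "\<dots> = s ^ k / fact k * ((M * s) ^ i / fact i)"
        unfolding c power_mult_distrib by (rule aux_real) auto
      finally show "b (i + k) = s ^ k / fact k * ((M * s) ^ i / fact i)" .
    qed
    moreover have "(\<lambda>i. s ^ k / fact k * ((M * s) ^ i / fact i)) sums (s ^ k / fact k * exp (M * s))"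
      using exp_converges[of "M * s"] by (intro sums_mult) (simp add: divide_inverse mult.commute)
    ultimately have "(\<lambda>i. b (i + k)) sums (s ^ k / fact k * exp (M * s))" by simp
    then show ?thesis by (subst (asm) sums_zero_iff_shift) (auto simp: b_def)
  qed
  have le: "norm (cf lam k n * complex_of_real s ^ n) \<le> b n" for n
  proof -
    have "norm (cf lam k n * complex_of_real s ^ n) = norm (cf lam k n) * s ^ n"
      using s by (simp add: norm_mult norm_power)
    also have "\<dots> \<le> (if k \<le> n then real (n choose (n - k)) * M ^ (n - k) / fact n else 0) * s ^ n"
      using s by (intro mult_right_mono cf_bound[OF M]) auto
    also have "\<dots> = b n" by (simp add: b_def)
    finally show ?thesis .
  qed
  have "norm (phis lam k (complex_of_real s)) \<le> (\<Sum>n. norm (cf lam k n * complex_of_real s ^ n))"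
    unfolding phis_def by (rule summable_norm[OF cf_summable])
  also have "\<dots> \<le> (\<Sum>n. b n)"
    by (rule suminf_le[OF le cf_summable sums_summable[OF bs]])
  also have "\<dots> = s ^ k / fact k * exp (M * s)" using bs by (simp add: sums_iff)
  finally show ?thesis .
qed

lemma lin_deriv:
  assumes "smooth_on S f" "t \<in> S"
  shows "((\<lambda>t. \<Sum>j\<le>k. c j * hderiv S j f t) has_vector_derivative
           (\<Sum>j\<le>k. c j * hderiv S (Suc j) f t)) (at t within S)"
  using assms unfolding smooth_on_def
  by (intro has_vector_derivative_sum has_vector_derivative_mult_right) auto

lemma Dop_lin:
  assumes ab: "a < b" and sm: "smooth_on {a..b} f"
  shows "\<exists>c. \<forall>t\<in>{a..b}. Dop lam {a..b} k f t = (\<Sum>j\<le>k. c j * hderiv {a..b} j f t)"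
proof (induction k)
  case 0
  show ?case by (rule exI[of _ "\<lambda>_. 1"]) simp
next
  case (Suc k)
  then obtain c where c: "\<And>t. t \<in> {a..b} \<Longrightarrow> Dop lam {a..b} k f t = (\<Sum>j\<le>k. c j * hderiv {a..b} j f t)"
    by blast
  define h where "h j t = hderiv {a..b} j f t" for j t
  define c' where "c' j = (if j = 0 then 0 else c (j - 1)) - lam k * (if j \<le> k then c j else 0)" for j
  have "Dop lam {a..b} (Suc k) f t = (\<Sum>j\<le>Suc k. c' j * h j t)" if t: "t \<in> {a..b}" for t
  proof -
    have d: "(Dop lam {a..b} k f has_vector_derivative (\<Sum>j\<le>k. c j * h (Suc j) t)) (at t within {a..b})"
      unfolding h_def
      by (rule has_vector_derivative_weaken[OF lin_deriv[OF sm t] t subset_refl]) (simp add: c)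
    have "Dop lam {a..b} (Suc k) f t = (\<Sum>j\<le>k. c j * h (Suc j) t) - lam k * (\<Sum>j\<le>k. c j * h j t)"
      using vector_derivative_within_closed_interval[OF ab t d] c[OF t] by (simp add: h_def)
    also have "\<dots> = (\<Sum>j\<le>Suc k. c' j * h j t)"
    proof -
      have 1: "(\<Sum>j\<le>Suc k. (if j = 0 then 0 else c (j - 1)) * h j t) = (\<Sum>j\<le>k. c j * h (Suc j) t)"
        by (subst sum.atMost_Suc_shift) simp
      have 2: "(\<Sum>j\<le>Suc k. (if j \<le> k then c j else 0) * h j t) = (\<Sum>j\<le>k. c j * h j t)"
        by (simp add: sum.atMost_Suc)
      have "(\<Sum>j\<le>Suc k. c' j * h j t) = (\<Sum>j\<le>Suc k. (if j = 0 then 0 else c (j - 1)) * h j t)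
              - lam k * (\<Sum>j\<le>Suc k. (if j \<le> k then c j else 0) * h j t)"
        unfolding c'_def by (simp add: left_diff_distrib sum_subtractf sum_distrib_left mult.assoc)
      then show ?thesis using 1 2 by simp
    qed
    finally show ?thesis .
  qed
  then show ?case unfolding h_def by blast
qed

lemma Dop_deriv:
  assumes ab: "a < b" and sm: "smooth_on {a..b} f" and t: "t \<in> {a..b}"
  shows "(Dop lam {a..b} k f has_vector_derivative
            (Dop lam {a..b} (Suc k) f t + lam k * Dop lam {a..b} k f t)) (at t within {a..b})"
proof -
  obtain c where c: "\<And>t. t \<in> {a..b} \<Longrightarrow> Dop lam {a..b} k f t = (\<Sum>j\<le>k. c j * hderiv {a..b} j f t)"
    using Dop_lin[OF ab sm] by blast
  have d: "(Dop lam {a..b} k f has_vector_derivative (\<Sum>j\<le>k. c j * hderiv {a..b} (Suc j) f t)) (at t within {a..b})"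
    by (rule has_vector_derivative_weaken[OF lin_deriv[OF sm t] t subset_refl]) (simp add: c)
  have "Dop lam {a..b} (Suc k) f t + lam k * Dop lam {a..b} k f t = (\<Sum>j\<le>k. c j * hderiv {a..b} (Suc j) f t)"
    using vector_derivative_within_closed_interval[OF ab t d] by simp
  then show ?thesis using d by simp
qed

lemma mvt_vec:
  fixes H :: "real \<Rightarrow> complex"
  assumes ab: "a \<le> b"
    and d: "\<And>t. t \<in> {a..b} \<Longrightarrow> (H has_vector_derivative H' t) (at t within {a..b})"
    and B: "\<And>t. t \<in> {a..b} \<Longrightarrow> norm (H' t) \<le> B"
  shows "norm (H b - H a) \<le> B * (b - a)"
proof -
  have "norm (H b - H a) \<le> B * norm (b - a)"
  proof (rule differentiable_bound[where f' = "\<lambda>t h. h *\<^sub>R H' t"])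
    show "convex {a..b}" by simp
    show "(H has_derivative (\<lambda>h. h *\<^sub>R H' t)) (at t within {a..b})" if "t \<in> {a..b}" for t
      using d[OF that] by (simp add: has_vector_derivative_def)
    show "onorm (\<lambda>h. h *\<^sub>R H' t) \<le> B" if "t \<in> {a..b}" for t
      using B[OF that] by (simp add: onorm_scaleR_left[OF bounded_linear_ident] onorm_id)
  qed (use ab in auto)
  then show ?thesis using ab by simp
qed

lemma phis_comp_deriv:
  "((\<lambda>t. phis lam k (complex_of_real (x - t))) has_vector_derivative
     (- (lam k * phis lam k (complex_of_real (x - t)) +
        (if k = 0 then 0 else phis lam (k - 1) (complex_of_real (x - t)))))) (at t within S)"
proof -
  have 1: "((\<lambda>t. complex_of_real (x - t)) has_vector_derivative (-1)) (at t within S)"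
  proof -
    have "((\<lambda>t. x - t) has_real_derivative (0 - 1)) (at t within S)"
      by (intro DERIV_diff DERIV_const DERIV_ident)
    from has_vector_derivative_of_real[OF this] show ?thesis by simp
  qed
  have 2: "(phis lam k has_field_derivative (lam k * phis lam k (complex_of_real (x - t)) +
        (if k = 0 then 0 else phis lam (k - 1) (complex_of_real (x - t)))))
        (at (complex_of_real (x - t)) within (\<lambda>t. complex_of_real (x - t)) ` S)"
    by (rule has_field_derivative_at_within[OF phis_deriv])
  show ?thesis using field_vector_diff_chain_within[OF 1 2] by (simp add: o_def)
qed

lemma taylor_error:
  assumes ab: "a < b" and sm: "smooth_on {a..b} f" and x: "x \<in> {a..b}" and N: "N \<ge> 1"
    and B: "\<And>t. t \<in> {a..x} \<Longrightarrow> norm (Dop lam {a..b} N f t * phis lam (N - 1) (complex_of_real (x - t))) \<le> B"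
  shows "norm (f x - (\<Sum>k<N. Dop lam {a..b} k f a * phis lam k (complex_of_real (x - a)))) \<le> B * (x - a)"
proof -
  define D where "D k t = Dop lam {a..b} k f t" for k t
  define P where "P k t = phis lam k (complex_of_real (x - t))" for k t
  define H where "H t = (\<Sum>k<N. D k t * P k t)" for t
  define A where "A k t = (if k = 0 then 0 else D k t * P (k - 1) t)" for k t
  have sub: "{a..x} \<subseteq> {a..b}" using x by auto
  have dH: "(H has_vector_derivative D N t * P (N - 1) t) (at t within {a..x})" if t: "t \<in> {a..x}" for t
  proof -
    have tab: "t \<in> {a..b}" using t sub by auto
    have dk: "((\<lambda>t. D k t * P k t) has_vector_derivative (A (Suc k) t - A k t)) (at t within {a..x})" for k
    proof -
      have dD: "(D k has_vector_derivative (D (Suc k) t + lam k * D k t)) (at t within {a..x})"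
        unfolding D_def by (rule has_vector_derivative_within_subset[OF Dop_deriv[OF ab sm tab] sub])
      have dP: "(P k has_vector_derivative (- (lam k * P k t + (if k = 0 then 0 else P (k - 1) t)))) (at t within {a..x})"
        unfolding P_def by (rule phis_comp_deriv)
      have "((\<lambda>t. D k t * P k t) has_vector_derivative
              (D k t * (- (lam k * P k t + (if k = 0 then 0 else P (k - 1) t))) + (D (Suc k) t + lam k * D k t) * P k t))
            (at t within {a..x})"
        by (rule has_vector_derivative_mult[OF dD dP])
      moreover have "D k t * (- (lam k * P k t + (if k = 0 then 0 else P (k - 1) t))) + (D (Suc k) t + lam k * D k t) * P k t
                = A (Suc k) t - A k t"
        unfolding A_def by (cases "k = 0") (simp_all add: algebra_simps)
      ultimately show ?thesis by simp
    qed
    have "(H has_vector_derivative (\<Sum>k<N. A (Suc k) t - A k t)) (at t within {a..x})"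
      unfolding H_def by (rule has_vector_derivative_sum) (rule dk)
    moreover have "(\<Sum>k<N. A (Suc k) t - A k t) = D N t * P (N - 1) t"
      using sum_lessThan_telescope[of "\<lambda>k. A k t" N] N by (simp add: A_def)
    ultimately show ?thesis by simp
  qed
  have ax: "a \<le> x" using x by auto
  have "norm (H x - H a) \<le> B * (x - a)"
  proof -
    have Bt: "\<And>t. t \<in> {a..x} \<Longrightarrow> norm (D N t * P (N - 1) t) \<le> B"
      unfolding D_def P_def by (rule B)
    show ?thesis by (rule mvt_vec[OF ax dH Bt])
  qed
  moreover have "H x = f x"
  proof -
    have "H x = (\<Sum>k<N. if k = 0 then D k x else 0)"
      unfolding H_def P_def by (intro sum.cong refl) (simp add: phis_zero)
    also have "\<dots> = D 0 x" using N by (simp add: sum.delta)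
    finally show ?thesis by (simp add: D_def)
  qed
  ultimately show ?thesis by (simp add: H_def D_def P_def norm_minus_commute)
qed

lemma alg1:
  fixes C X s d e F :: real
  assumes "F \<noteq> 0"
  shows "C * (of_nat (Suc m) * F) * s ^ Suc m * (d ^ m / F * (X * e ^ Suc m)) * d
         = C * X * of_nat (Suc m) * (s * d * e) ^ Suc m"
  using assms by (simp add: power_mult_distrib field_simps)

lemma alg2: "real (2 * n) * (1 / 2) ^ (2 * n) \<le> 2 * (1 / 2 :: real) ^ n"
proof -
  have "n < 2 ^ n" by (rule less_exp)
  then have "real n \<le> 2 ^ n" by (metis less_imp_le of_nat_le_iff of_nat_numeral of_nat_power)
  then have a: "real n * (1 / 2) ^ n \<le> 1" by (simp add: power_one_over field_simps)
  have "real (2 * n) * (1 / 2) ^ (2 * n) = 2 * (1 / 2) ^ n * (real n * (1 / 2) ^ n)"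
    by (simp add: power_mult power2_eq_square mult_ac)
  also have "\<dots> \<le> 2 * (1 / 2) ^ n * 1"
    by (rule mult_left_mono[OF a]) simp
  finally show ?thesis by simp
qed

lemma alg3: "X > 0 \<Longrightarrow> Y > 0 \<Longrightarrow> s * (1 / (2 * Y * X)) * X = s / (2 * (Y::real))"
  by (simp add: field_simps)

theorem mainTheorem8:
  fixes lam :: "nat \<Rightarrow> complex" and \<beta> \<gamma> \<sigma> C x0 :: real and f :: "real \<Rightarrow> complex"
  assumes "\<beta> \<ge> 0"
    and "limsup (\<lambda>n. ereal (cmod (lam n) / real n)) \<le> ereal \<beta>"
    and "\<gamma> > 0"
    and "smooth_on {x0..x0+\<gamma>} f"
    and "\<sigma> \<ge> 0" and "C > 0"
    and "\<And>n t. t \<in> {x0..x0+\<gamma>} \<Longrightarrow>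
           cmod (Dop lam {x0..x0+\<gamma>} (2*n) f t) \<le> C * fact (2*n) * \<sigma> ^ (2*n)"
  shows "\<exists>\<delta>. 0 < \<delta> \<and> \<delta> < \<gamma> \<and>
           uniform_limit {x0..x0+\<delta>}
             (\<lambda>n x. \<Sum>k<2*n. Dop lam {x0..x0+\<gamma>} k f x0 * Phi lam k (complex_of_real (x - x0)))
             f sequentially"
proof -
  note beta = assms(1) and gam = assms(3) and sm = assms(4) and sig = assms(5) and C = assms(6)
    and Dbd = assms(7)
  have ab: "x0 < x0 + \<gamma>" using gam by simp
  have "limsup (\<lambda>n. ereal (cmod (lam n) / real n)) < ereal (\<beta> + 1)"
    using assms(2) by (rule order.strict_trans1) simp
  then have "eventually (\<lambda>n. ereal (cmod (lam n) / real n) < ereal (\<beta> + 1)) sequentially"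
    by (rule Limsup_lessD)
  then obtain N where N: "\<And>n. n \<ge> N \<Longrightarrow> cmod (lam n) / real n < \<beta> + 1"
    unfolding eventually_sequentially by auto
  define K where "K = (\<Sum>j\<le>N. cmod (lam j))"
  have K0: "K \<ge> 0" unfolding K_def by (simp add: sum_nonneg)
  have lamb: "cmod (lam j) \<le> K + (\<beta> + 1) * real j" for j
  proof (cases "j \<le> N")
    case True
    then have "cmod (lam j) \<le> K" unfolding K_def by (intro member_le_sum) auto
    moreover have "0 \<le> (\<beta> + 1) * real j" using beta by simp
    ultimately show ?thesis by linarith
  next
    case False
    then have j0: "real j > 0" by simp
    have "cmod (lam j) / real j < \<beta> + 1" using N[of j] False by simp
    then have "cmod (lam j) < (\<beta> + 1) * real j" using j0 by (simp add: field_simps)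
    then show ?thesis using K0 by linarith
  qed
  define \<delta> where "\<delta> = min (\<gamma> / 2) (1 / (2 * (\<sigma> + 1) * exp (\<beta> + 1)))"
  have d0: "\<delta> > 0" unfolding \<delta>_def using gam sig by simp
  have dg: "\<delta> < \<gamma>" unfolding \<delta>_def using gam by simp
  have d1: "\<delta> \<le> 1"
  proof -
    have "1 \<le> (\<sigma> + 1) * exp (\<beta> + 1)"
      using sig beta by (intro order.trans[OF _ mult_mono[of 1 "\<sigma> + 1" 1 "exp (\<beta> + 1)"]]) auto
    then have "1 / (2 * (\<sigma> + 1) * exp (\<beta> + 1)) \<le> 1" by (simp add: field_simps)
    then show ?thesis unfolding \<delta>_def by simp
  qed
  define E where "E = exp ((\<beta> + 1) * \<delta>)"
  define q where "q = \<sigma> * \<delta> * E"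
  have q0: "q \<ge> 0" unfolding q_def E_def using sig d0 by simp
  have q1: "q \<le> 1 / 2"
  proof -
    have "E \<le> exp (\<beta> + 1)" unfolding E_def using d1 beta by (simp add: mult_left_le)
    then have "q \<le> \<sigma> * \<delta> * exp (\<beta> + 1)" unfolding q_def using sig d0
      by (intro mult_left_mono) auto
    also have "\<dots> \<le> \<sigma> * (1 / (2 * (\<sigma> + 1) * exp (\<beta> + 1))) * exp (\<beta> + 1)"
      using sig unfolding \<delta>_def by (intro mult_right_mono mult_left_mono) auto
    also have "\<dots> = \<sigma> / (2 * (\<sigma> + 1))"
    proof -
      have "exp (\<beta> + 1) > 0" "\<sigma> + 1 > 0" using sig by auto
      then show ?thesis by (rule alg3)
    qed
    also have "\<dots> \<le> 1 / 2" using sig by (simp add: field_simps)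
    finally show ?thesis .
  qed
  define I where "I = {x0..x0+\<gamma>}"
  define S where "S n x = (\<Sum>k<2*n. Dop lam I k f x0 * Phi lam k (complex_of_real (x - x0)))" for n x
  define bb where "bb n = C * exp (K * \<delta>) * 2 * (1 / 2) ^ n" for n :: nat
  have err: "norm (f x - S n x) \<le> bb n" if n: "n \<ge> 1" and x: "x \<in> {x0..x0+\<delta>}" for n x
  proof -
    obtain m where m: "2 * n = Suc m" using n by (metis Suc_pred mult_pos_pos zero_less_numeral less_le_trans zero_less_one)
    define M where "M = K + (\<beta> + 1) * real (2 * n)"
    have M0: "M \<ge> 0" unfolding M_def using K0 beta by simp
    have Mj: "cmod (lam j) \<le> M" if "j \<le> m" for j
    proof -
      have "real j \<le> real (2 * n)" using that m by simp
      then have "(\<beta> + 1) * real j \<le> (\<beta> + 1) * real (2 * n)" using beta by (intro mult_left_mono) auto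
      then show ?thesis using lamb[of j] unfolding M_def by linarith
    qed
    define Bn where "Bn = C * fact (2 * n) * \<sigma> ^ (2 * n) * (\<delta> ^ m / fact m * exp (M * \<delta>))"
    have xI: "x \<in> {x0..x0+\<gamma>}" using x dg by auto
    have Bt: "norm (Dop lam {x0..x0+\<gamma>} (2 * n) f t * phis lam (2 * n - 1) (complex_of_real (x - t))) \<le> Bn"
      if t: "t \<in> {x0..x}" for t
    proof -
      have tI: "t \<in> {x0..x0+\<gamma>}" using t xI by auto
      have st: "0 \<le> x - t" "x - t \<le> \<delta>" using t x by auto
      have p1: "norm (phis lam m (complex_of_real (x - t))) \<le> (x - t) ^ m / fact m * exp (M * (x - t))"
        by (rule phis_bound[OF M0 Mj st(1)])
      also have "\<dots> \<le> \<delta> ^ m / fact m * exp (M * \<delta>)"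
        using st M0 by (intro mult_mono divide_right_mono power_mono) (auto intro: mult_left_mono)
      finally have p2: "norm (phis lam m (complex_of_real (x - t))) \<le> \<delta> ^ m / fact m * exp (M * \<delta>)" .
      have e: "2 * n - 1 = m" using m by simp
      have "norm (Dop lam {x0..x0+\<gamma>} (2 * n) f t * phis lam (2 * n - 1) (complex_of_real (x - t)))
          = norm (Dop lam {x0..x0+\<gamma>} (2 * n) f t) * norm (phis lam m (complex_of_real (x - t)))"
        by (simp only: norm_mult e)
      also have "\<dots> \<le> (C * fact (2 * n) * \<sigma> ^ (2 * n)) * (\<delta> ^ m / fact m * exp (M * \<delta>))"
        by (rule mult_mono[OF Dbd[OF tI, of n] p2]) (use C sig in auto)
      finally show ?thesis unfolding Bn_def .
    qed
    have "norm (f x - (\<Sum>k<2 * n. Dop lam {x0..x0+\<gamma>} k f x0 * phis lam k (complex_of_real (x - x0))))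
          \<le> Bn * (x - x0)"
      by (rule taylor_error[OF ab sm xI _ Bt]) (use n in auto)
    also have "\<dots> \<le> Bn * \<delta>"
    proof (rule mult_left_mono)
      show "x - x0 \<le> \<delta>" using x by auto
      show "0 \<le> Bn" unfolding Bn_def using C sig d0 by simp
    qed
    also have "Bn * \<delta> = C * exp (K * \<delta>) * real (2 * n) * q ^ (2 * n)"
    proof -
      have Md: "M * \<delta> = K * \<delta> + of_nat (Suc m) * ((\<beta> + 1) * \<delta>)"
        unfolding M_def m by (simp add: algebra_simps)
      have "exp (M * \<delta>) = exp (K * \<delta>) * exp (of_nat (Suc m) * ((\<beta> + 1) * \<delta>))"
        unfolding Md by (rule exp_add)
      also have "\<dots> = exp (K * \<delta>) * E ^ Suc m"
        unfolding E_def by (simp only: exp_of_nat_mult)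
      finally have "exp (M * \<delta>) = exp (K * \<delta>) * E ^ Suc m" .
      then have "Bn * \<delta> = C * (of_nat (Suc m) * fact m) * \<sigma> ^ Suc m * (\<delta> ^ m / fact m * (exp (K * \<delta>) * E ^ Suc m)) * \<delta>"
        unfolding Bn_def m fact_Suc by simp
      also have "\<dots> = C * exp (K * \<delta>) * of_nat (Suc m) * (\<sigma> * \<delta> * E) ^ Suc m"
        by (rule alg1) simp
      finally show ?thesis unfolding q_def m by simp
    qed
    also have "\<dots> \<le> C * exp (K * \<delta>) * (real (2 * n) * (1 / 2) ^ (2 * n))"
      unfolding mult.assoc using C q0 q1
      by (intro mult_left_mono power_mono) auto
    also have "\<dots> \<le> C * exp (K * \<delta>) * (2 * (1 / 2) ^ n)"
      using C by (intro mult_left_mono alg2) auto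
    also have "\<dots> = bb n" unfolding bb_def by simp
    finally show ?thesis unfolding S_def I_def by (simp add: Phi_eq_phis)
  qed
  have bb0: "bb \<longlonglongrightarrow> 0"
    unfolding bb_def by (intro tendsto_mult_right_zero LIMSEQ_power_zero) simp
  have "uniform_limit {x0..x0+\<delta>} S f sequentially"
  proof (rule uniform_limitI)
    fix e :: real assume e: "e > 0"
    have "eventually (\<lambda>n. bb n < e) sequentially"
      using bb0 e by (rule order_tendstoD)
    moreover have "eventually (\<lambda>n. n \<ge> (1::nat)) sequentially" by (rule eventually_ge_at_top)
    ultimately show "eventually (\<lambda>n. \<forall>x\<in>{x0..x0+\<delta>}. dist (S n x) (f x) < e) sequentially"
    proof eventually_elim
      case (elim n)
      show ?case
      proof
        fix x assume "x \<in> {x0..x0+\<delta>}"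
        then have "norm (f x - S n x) \<le> bb n" using err elim by blast
        then show "dist (S n x) (f x) < e" using elim by (simp add: dist_norm norm_minus_commute)
      qed
    qed
  qed
  then show ?thesis using d0 dg unfolding S_def I_def by blast
qed

end
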